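(* For every integer $a\ge1$ and every partition $\mu$, $$B_a\,e_\mu\Big|_{q\to1+q}\;=\;\sum_{\nu\vdash|\mu|+a}Q_{\nu,\mu,a}(q)\,e_\nu[X]$$ for some polynomials $Q_{\nu,\mu,a}(q)$ with nonnegative integer coefficients.
   Context: For an integer $a\ge1$, the operator $B_a$ acts on symmetric functions $F[X]$ (with coefficients in $\mathbb{Q}[q]$) by $$B_aF[X]=F\Big[X+\epsilon\frac{1-q}{z}\Big]\sum_{r\ge0}z^re_r[X]\Big|_{z^a},$$ where $|_{z^a}$ denotes taking the coefficient of $z^a$, the brackets denote plethystic substitution, and $p_k[\epsilon]=(-1)^k$. Thus $p_k[X+\epsilon\frac{1-q}{z}]=p_k[X]+(-1)^k\frac{1-q^k}{z^k}$. Equivalently, $B_a=\sum_{r,s\ge0}(-1)^sq^r\,e_{a+r+s}\,e_r^\perp h_s^\perp$, where $f^\perp$ is the Hall-adjoint of multiplication by $f$. Here $e_\mu=e_{\mu_1}e_{\mu_2}\cdots$, and $|_{q\to1+q}$ means substituting $1+q$ for $q$. *)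

theory Defs
  imports "HOL-Library.Multiset" "HOL-Computational_Algebra.Polynomial"
begin

text \<open>Symmetric functions over Q[q] are represented in the power-sum basis:
  Lambda_{Q[q]} = Q[q][p_1,p_2,...].  A symmetric function F is given by its
  coefficient function: F lam is the coefficient of p_lam, where a partition lam
  is a multiset of positive naturals.\<close>

type_synonym symf = "nat multiset \<Rightarrow> rat poly"

definition is_partition :: "nat multiset \<Rightarrow> bool" where
  "is_partition lam \<longleftrightarrow> 0 \<notin># lam"

definition sym_one :: symf where
  "sym_one lam = (if lam = {#} then 1 else 0)"

text \<open>product: p_alpha p_beta = p_(alpha+beta)\<close>
definition symprod :: "symf \<Rightarrow> symf \<Rightarrow> symf" where
  "symprod f g lam = (\<Sum>alpha\<in>{alpha. alpha \<subseteq># lam}. f alpha * g (lam - alpha))"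

definition psym :: "nat \<Rightarrow> symf" where
  "psym k lam = (if lam = {#k#} then 1 else 0)"

definition zee :: "nat multiset \<Rightarrow> rat" where
  "zee lam = (\<Prod>k\<in>set_mset lam. of_nat k ^ count lam k * of_nat (fact (count lam k)))"

text \<open>elementary symmetric function e_r = sum_{lam |- r} eps_lam p_lam / z_lam\<close>
definition e_sym :: "nat \<Rightarrow> symf" where
  "e_sym r lam = (if is_partition lam \<and> sum_mset lam = r
      then [: (-1) ^ (r - size lam) / zee lam :] else 0)"

definition e_part :: "nat multiset \<Rightarrow> symf" where
  "e_part mu = foldr (\<lambda>r acc. symprod (e_sym r) acc) (sorted_list_of_multiset mu) sym_one"

text \<open>Plethystic substitution of a power-sum monomial:
  psub ks d = coefficient of z^(-d) in prod_{k in ks} (p_k + (-1)^k (1 - q^k) z^(-k)),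
  i.e. p_ks[X + eps (1-q)/z] at z^(-d).\<close>
fun psub :: "nat list \<Rightarrow> nat \<Rightarrow> symf" where
  "psub [] d = (if d = 0 then sym_one else (\<lambda>_. 0))"
| "psub (k # ks) d = (\<lambda>lam. symprod (psym k) (psub ks d) lam
      + (if k \<le> d then (-1) ^ k * (1 - monom 1 k) * psub ks (d - k) lam else 0))"

text \<open>B_a F = F[X + eps(1-q)/z] * sum_r z^r e_r |_{z^a}
  = sum_lam F_lam sum_d (p_lam[X + eps(1-q)/z] at z^(-d)) * e_(a+d).\<close>
definition Bop :: "nat \<Rightarrow> symf \<Rightarrow> symf" where
  "Bop a F nu = (\<Sum>lam\<in>{lam. F lam \<noteq> 0}. \<Sum>d\<in>{0..sum_mset lam}.
       F lam * symprod (psub (sorted_list_of_multiset lam) d) (e_sym (a + d)) nu)"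

definition q_shift :: "symf \<Rightarrow> symf" where
  "q_shift F lam = pcompose (F lam) [:1, 1:]"

end

theory Submission
  imports Defs "HOL-Library.Poly_Mapping"
begin


type_synonym sf = "nat multiset \<Rightarrow>\<^sub>0 rat poly"
abbreviation lk :: "sf \<Rightarrow> nat multiset \<Rightarrow> rat poly" where "lk \<equiv> Poly_Mapping.lookup"

lemma finite_submsets: "finite {alpha. alpha \<subseteq># (lam::nat multiset)}"
proof -
  have "{alpha. alpha \<subseteq># lam} \<subseteq> mset ` {xs. set xs \<subseteq> set_mset lam \<and> length xs \<le> size lam}"
  proof
    fix x assume "x \<in> {alpha. alpha \<subseteq># lam}"
    then have "x \<subseteq># lam" by simp
    then show "x \<in> mset ` {xs. set xs \<subseteq> set_mset lam \<and> length xs \<le> size lam}"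
      by (intro image_eqI[of _ _ "sorted_list_of_multiset x"])
         (auto dest: mset_subset_eqD size_mset_mono, metis mset_sorted_list_of_multiset size_mset size_mset_mono)
  qed
  then show ?thesis by (rule finite_subset) (intro finite_imageI finite_lists_length_le, simp)
qed

lemma lookup_mult: "lk (f * g) lam = symprod (lk f) (lk g) lam"
proof -
  have ff: "finite {a. lk f a \<noteq> 0}" "finite {a. lk g a \<noteq> 0}" by auto
  have "lk (f * g) lam = prod_fun (lk f) (lk g) lam"
    by (simp add: times_poly_mapping.rep_eq)
  also have "\<dots> = (\<Sum>(a, b). lk f a * lk g b when lam = a + b)"
    by (rule prod_fun_unfold_prod[OF ff])
  also have "\<dots> = sum (\<lambda>(a, b). lk f a * lk g b when lam = a + b) ((\<lambda>a. (a, lam - a)) ` {a. a \<subseteq># lam})"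
    by (rule Sum_any.expand_superset) (auto simp: finite_submsets when_def split: if_splits)
  also have "\<dots> = symprod (lk f) (lk g) lam"
    unfolding symprod_def
    by (subst sum.reindex) (auto simp: inj_on_def when_def subset_mset.add_diff_inverse intro!: sum.cong)
  finally show ?thesis .
qed

definition const :: "rat poly \<Rightarrow> sf" where "const c = Poly_Mapping.single {#} c"

lemma lookup_const_mult: "lk (const c * x) lam = c * lk x lam"
proof -
  have "lk (const c * x) lam = (\<Sum>alpha\<in>{alpha. alpha \<subseteq># lam}. (if alpha = {#} then c * lk x (lam - alpha) else 0))"
    unfolding lookup_mult symprod_def const_def lookup_single
    by (intro sum.cong) (auto simp: when_def)
  also have "\<dots> = c * lk x lam"
    by (simp add: finite_submsets)
  finally show ?thesis .
qed

lemma const_add: "const (a + b) = const a + const b"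
  by (simp add: const_def single_add)
lemma const_mult: "const (a * b) = const a * const b"
  by (simp add: const_def mult_single)
lemma const_one: "const 1 = 1"
  by (simp add: const_def)
lemma const_zero: "const 0 = 0"
  by (simp add: const_def)
lemma lookup_const: "lk (const c) lam = (if lam = {#} then c else 0)"
  by (simp add: const_def lookup_single when_def)

definition P :: "nat \<Rightarrow> sf" where "P k = Poly_Mapping.single {#k#} 1"
lemma lookup_P: "lk (P k) = psym k"
  by (auto simp: P_def psym_def lookup_single when_def fun_eq_iff)

definition Cq :: "nat \<Rightarrow> rat poly" where "Cq k = (-1) ^ k * (1 - monom 1 k)"

definition fac :: "nat \<Rightarrow> sf poly" where
  "fac k = [:P k:] + monom (const (Cq k)) k"

lemma psub_eq: "psub xs d lam = lk (coeff (prod_list (map fac xs)) d) lam"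
proof (induction xs arbitrary: d lam)
  case Nil
  then show ?case by (auto simp: sym_one_def lookup_one when_def coeff_1)
next
  case (Cons k ks)
  have "coeff (prod_list (map fac (k # ks))) d =
        P k * coeff (prod_list (map fac ks)) d +
        (if k \<le> d then const (Cq k) * coeff (prod_list (map fac ks)) (d - k) else 0)"
    by (simp add: fac_def distrib_right coeff_monom_mult)
  moreover have "lk (P k * X) lam = symprod (psym k) (lk X) lam" for X lam
    by (simp add: lookup_mult lookup_P)
  moreover have "psub ks d' = lk (coeff (prod_list (map fac ks)) d')" for d'
    using Cons.IH by (rule ext)
  ultimately show ?case
    by (simp add: lookup_add lookup_const_mult Cq_def)
qed

lemma psub_zero: "sum_list xs < d \<Longrightarrow> psub xs d lam = 0"
  by (induction xs arbitrary: d lam) (auto simp: symprod_def)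



definition M :: "nat multiset \<Rightarrow> sf poly" where "M lam = prod_mset (image_mset fac lam)"

lemma M_sorted: "prod_list (map fac (sorted_list_of_multiset lam)) = M lam"
  by (metis M_def mset_map mset_sorted_list_of_multiset prod_mset_prod_list)

lemma M_add: "M (a + b) = M a * M b"
  by (simp add: M_def)

definition Phi :: "sf \<Rightarrow> sf poly" where
  "Phi F = (\<Sum>lam\<in>Poly_Mapping.keys F. smult (const (lk F lam)) (M lam))"

lemma Phi_superset: "finite A \<Longrightarrow> Poly_Mapping.keys F \<subseteq> A \<Longrightarrow>
   Phi F = (\<Sum>lam\<in>A. smult (const (lk F lam)) (M lam))"
  unfolding Phi_def
  apply (rule sum.mono_neutral_left)
    apply assumption+
  apply (simp add: in_keys_iff const_zero)
  done

lemma Phi_add: "Phi (F + G) = Phi F + Phi G"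
proof -
  let ?A = "Poly_Mapping.keys F \<union> Poly_Mapping.keys G"
  have "Phi (F + G) = (\<Sum>lam\<in>?A. smult (const (lk (F + G) lam)) (M lam))"
    by (rule Phi_superset) (auto simp: keys_add intro: order.trans[OF keys_add])
  also have "\<dots> = (\<Sum>lam\<in>?A. smult (const (lk F lam)) (M lam)) + (\<Sum>lam\<in>?A. smult (const (lk G lam)) (M lam))"
    by (simp add: lookup_add const_add smult_add_left sum.distrib)
  also have "\<dots> = Phi F + Phi G"
    using Phi_superset[of ?A F] Phi_superset[of ?A G] by simp
  finally show ?thesis .
qed

lemma Phi_zero: "Phi 0 = 0"
  by (simp add: Phi_def)

lemma Phi_sum: "Phi (sum f A) = (\<Sum>x\<in>A. Phi (f x))"
  by (induction A rule: infinite_finite_induct) (auto simp: Phi_zero Phi_add)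

lemma Phi_single: "Phi (Poly_Mapping.single lam c) = smult (const c) (M lam)"
  by (cases "c = 0") (auto simp: Phi_def const_zero)

lemma sum_single: "F = (\<Sum>a\<in>Poly_Mapping.keys F. Poly_Mapping.single a (lk F a))"
proof (rule poly_mapping_eqI)
  fix k
  show "lk F k = lk (\<Sum>a\<in>Poly_Mapping.keys F. Poly_Mapping.single a (lk F a)) k"
    by (simp add: lookup_sum lookup_single when_def in_keys_iff)
qed

lemma Phi_mult: "Phi (F * G) = Phi F * Phi G"
proof -
  have "F * G = (\<Sum>a\<in>Poly_Mapping.keys F. \<Sum>b\<in>Poly_Mapping.keys G.
      Poly_Mapping.single (a + b) (lk F a * lk G b))"
    by (subst sum_single[of F], subst sum_single[of G]) (simp add: sum_product mult_single)
  then have "Phi (F * G) = (\<Sum>a\<in>Poly_Mapping.keys F. \<Sum>b\<in>Poly_Mapping.keys G.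
      smult (const (lk F a)) (M a) * smult (const (lk G b)) (M b))"
    by (simp add: Phi_sum Phi_single M_add const_mult mult_smult_left mult_smult_right smult_smult; simp add: mult.commute)
  also have "\<dots> = Phi F * Phi G"
    by (simp add: Phi_def sum_product)
  finally show ?thesis .
qed

lemma Phi_one: "Phi 1 = 1"
  by (metis Phi_single M_def const_one image_mset_empty prod_mset_empty single_one smult_1_left zero_multiset.abs_eq)

lemma Phi_const: "Phi (const c) = [:const c:]"
  by (simp add: const_def Phi_single M_def)

lemma Phi_uminus: "Phi (- F) = - Phi F"
proof -
  have "Phi (- F) + Phi F = 0" using Phi_add[of "-F" F] by (simp add: Phi_zero)
  then show ?thesis by (simp add: eq_neg_iff_add_eq_0)
qed

lemma Phi_P: "Phi (P k) = fac k"
  by (simp add: P_def Phi_single M_def const_one)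



definition Parts :: "nat \<Rightarrow> nat multiset set" where
  "Parts N = {nu. is_partition nu \<and> sum_mset nu = N}"

lemma size_le_sum: "is_partition nu \<Longrightarrow> size nu \<le> sum_mset nu"
  unfolding is_partition_def
  by (induction nu) (auto simp: Suc_le_eq)

lemma elem_le_sum: "x \<in># (nu::nat multiset) \<Longrightarrow> x \<le> sum_mset nu"
  by (metis le_add1 multi_member_split sum_mset.add_mset)

lemma finite_Parts: "finite (Parts N)"
proof -
  have "Parts N \<subseteq> mset ` {xs. set xs \<subseteq> {0..N} \<and> length xs \<le> N}"
  proof
    fix x assume "x \<in> Parts N"
    then have x: "is_partition x" "sum_mset x = N" by (auto simp: Parts_def)
    then show "x \<in> mset ` {xs. set xs \<subseteq> {0..N} \<and> length xs \<le> N}"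
      using size_le_sum[OF x(1)] elem_le_sum[of _ x]
      by (intro image_eqI[of _ _ "sorted_list_of_multiset x"])
         (auto, metis mset_sorted_list_of_multiset size_mset)
  qed
  then show ?thesis by (rule finite_subset) (intro finite_imageI finite_lists_length_le, simp)
qed

lemma e_sym_supp: "{lam. e_sym r lam \<noteq> 0} \<subseteq> Parts r"
  by (auto simp: e_sym_def Parts_def split: if_splits)

definition E :: "nat \<Rightarrow> sf" where "E r = Abs_poly_mapping (e_sym r)"

lemma lookup_E: "lk (E r) = e_sym r"
  unfolding E_def
  by (rule Abs_poly_mapping_inverse) (auto intro: finite_subset[OF e_sym_supp finite_Parts])

lemma sum_mset_count: "finite S \<Longrightarrow> set_mset (N::nat multiset) \<subseteq> S \<Longrightarrow> sum_mset N = (\<Sum>i\<in>S. count N i * i)"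
proof (induction N)
  case empty then show ?case by simp
next
  case (add x N)
  then have "sum_mset (add_mset x N) = x + (\<Sum>i\<in>S. count N i * i)" by simp
  also have "\<dots> = (\<Sum>i\<in>S. (if i = x then i else 0)) + (\<Sum>i\<in>S. count N i * i)"
    using add.prems by (simp add: sum.delta)
  also have "\<dots> = (\<Sum>i\<in>S. count (add_mset x N) i * i)"
    unfolding sum.distrib[symmetric] by (rule sum.cong) auto
  finally show ?case .
qed

lemma zee_superset: "finite S \<Longrightarrow> set_mset N \<subseteq> S \<Longrightarrow>
  zee N = (\<Prod>k\<in>S. of_nat k ^ count N k * of_nat (fact (count N k)))"
  unfolding zee_def
  by (rule prod.mono_neutral_left) (auto simp: not_in_iff)

lemma zee_remove:
  assumes "i \<in># lam"
  shows "zee lam = zee (lam - {#i#}) * of_nat i * of_nat (count lam i)"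
proof -
  define mu where "mu = lam - {#i#}"
  have lam: "lam = add_mset i mu" using assms by (simp add: mu_def)
  let ?S = "set_mset lam"
  have S: "finite ?S" "set_mset mu \<subseteq> ?S" "i \<in> ?S" using assms by (auto simp: lam)
  have "zee lam = (of_nat i ^ count lam i * of_nat (fact (count lam i))) *
     (\<Prod>k\<in>?S - {i}. of_nat k ^ count lam k * of_nat (fact (count lam k)))"
    using S by (simp add: zee_superset[OF S(1)] prod.remove)
  also have "(\<Prod>k\<in>?S - {i}. of_nat k ^ count lam k * of_nat (fact (count lam k))) =
      (\<Prod>k\<in>?S - {i}. of_nat k ^ count mu k * of_nat (fact (count mu k)) :: rat)"
    by (intro prod.cong) (auto simp: lam)
  also have "zee mu = (of_nat i ^ count mu i * of_nat (fact (count mu i))) *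
     (\<Prod>k\<in>?S - {i}. of_nat k ^ count mu k * of_nat (fact (count mu k)))"
    using S by (simp add: zee_superset[OF S(1) S(2)] prod.remove)
  ultimately show ?thesis
    by (simp add: mu_def[symmetric] lam fact_Suc algebra_simps)
qed

lemma zee_nonzero: "is_partition lam \<Longrightarrow> zee lam \<noteq> 0"
  unfolding zee_def is_partition_def
  by (auto simp: prod_zero_iff)



lemma lookup_P_mult: "lk (P i * X) lam = (if i \<in># lam then lk X (lam - {#i#}) else 0)"
proof -
  have "lk (P i * X) lam = (\<Sum>alpha\<in>{alpha. alpha \<subseteq># lam}. (if alpha = {#i#} then lk X (lam - alpha) else 0))"
    unfolding lookup_mult lookup_P symprod_def psym_def
    by (intro sum.cong) auto
  also have "\<dots> = (if i \<in># lam then lk X (lam - {#i#}) else 0)"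
    by (simp add: finite_submsets)
  finally show ?thesis .
qed

lemma sum_const_poly: "(\<Sum>i\<in>A. [:f i:]) = [:(\<Sum>i\<in>A. f i):]"
  by (induction A rule: infinite_finite_induct) auto

lemma neg1_pow_poly: "((-1) ^ n :: rat poly) = [:(-1) ^ n:]"
  by (induction n) auto

lemma newton_pt:
  "of_nat r * e_sym r lam =
   (\<Sum>i\<in>{1..r}. (-1)^(i-1) * (if i \<in># lam then e_sym (r-i) (lam - {#i#}) else 0))"
proof (cases "is_partition lam \<and> sum_mset lam = r")
  case False
  have "(-1)^(i-1) * (if i \<in># lam then e_sym (r-i) (lam - {#i#}) else 0) = 0" if i: "i \<in> {1..r}" for i
  proof (cases "i \<in># lam \<and> is_partition (lam - {#i#}) \<and> sum_mset (lam - {#i#}) = r - i")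
    case True
    then have lam: "lam = add_mset i (lam - {#i#})" by simp
    have "0 \<notin># lam - {#i#}" using True by (auto simp: is_partition_def)
    then have "is_partition lam" unfolding is_partition_def using i
      by (auto simp: in_diff_count)
    moreover have "sum_mset lam = i + sum_mset (lam - {#i#})" using True
      by (meson sum_mset.remove)
    then have "sum_mset lam = r" using True i by simp
    ultimately show ?thesis using False by simp
  next
    case F2: False
    then show ?thesis by (auto simp: e_sym_def)
  qed
  then have "(\<Sum>i\<in>{1..r}. (-1)^(i-1) * (if i \<in># lam then e_sym (r-i) (lam - {#i#}) else 0)) = 0"
    by (intro sum.neutral) blast
  moreover have "e_sym r lam = 0" using False unfolding e_sym_def by auto
  ultimately show ?thesis by simp
next
  case True
  then have part: "is_partition lam" and sr: "sum_mset lam = r" by auto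
  let ?s = "size lam"
  let ?c = "(-1) ^ (r - ?s) / zee lam :: rat"
  have zl: "zee lam \<noteq> 0" using zee_nonzero[OF part] .
  have trm: "(-1)^(i-1) * (if i \<in># lam then e_sym (r-i) (lam - {#i#}) else 0) =
     (if i \<in># lam then [: ?c * of_nat (count lam i * i) :] else 0)" if i: "i \<in> {1..r}" for i
  proof (cases "i \<in># lam")
    case True
    define mu where "mu = lam - {#i#}"
    have lam: "lam = add_mset i mu" using True by (simp add: mu_def)
    have pmu: "is_partition mu" using part by (auto simp: is_partition_def lam)
    have smu: "sum_mset mu = r - i" using sr by (simp add: lam)
    have szmu: "size mu \<le> r - i" using size_le_sum[OF pmu] smu by simp
    have ss: "?s = Suc (size mu)" by (simp add: lam)
    have expo: "(i - 1) + (r - i - size mu) = r - ?s" using i szmu ss by auto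
    have cnt: "count lam i \<noteq> 0" using True by simp
    have i0: "i \<noteq> 0" using i by simp
    have z: "zee lam = zee mu * of_nat i * of_nat (count lam i)"
      using zee_remove[OF True] by (simp add: mu_def)
    have zmu: "zee mu \<noteq> 0" using zee_nonzero[OF pmu] .
    have "(-1::rat)^(i-1) * ((-1) ^ (r - i - size mu) / zee mu) = ?c * of_nat (count lam i * i)"
    proof -
      have pw: "(-1::rat)^(i-1) * (-1)^(r-i-size mu) = (-1)^(r - ?s)"
        by (simp only: power_add[symmetric] expo)
      show ?thesis using zmu cnt i0
        by (simp add: z pw[symmetric] field_simps)
    qed
    then show ?thesis
      using True pmu smu
      by (simp add: e_sym_def mu_def[symmetric] neg1_pow_poly) (metis mult.commute)
  next
    case False
    then show ?thesis by simp
  qed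
  have "(\<Sum>i\<in>{1..r}. (-1)^(i-1) * (if i \<in># lam then e_sym (r-i) (lam - {#i#}) else 0)) =
        (\<Sum>i\<in>{1..r}. (if i \<in># lam then [: ?c * of_nat (count lam i * i) :] else 0))"
    using trm by (rule sum.cong[OF refl])
  also have "\<dots> = (\<Sum>i\<in>{i\<in>{1..r}. i \<in># lam}. [: ?c * of_nat (count lam i * i) :])"
    by (rule sum.inter_filter[symmetric]) simp
  also have "{i\<in>{1..r}. i \<in># lam} = set_mset lam"
    using part sr elem_le_sum[of _ lam] by (auto simp: is_partition_def Suc_le_eq intro: Nat.gr0I)
  also have "(\<Sum>i\<in>set_mset lam. [: ?c * of_nat (count lam i * i) :]) = [: ?c * of_nat r :]"
  proof -
    have "(\<Sum>i\<in>set_mset lam. [: ?c * of_nat (count lam i * i) :]) =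
          [: \<Sum>i\<in>set_mset lam. ?c * of_nat (count lam i * i) :]" by (rule sum_const_poly)
    also have "(\<Sum>i\<in>set_mset lam. ?c * of_nat (count lam i * i)) =
       ?c * of_nat (\<Sum>i\<in>set_mset lam. count lam i * i)" by (simp only: sum_distrib_left of_nat_sum)
    also have "(\<Sum>i\<in>set_mset lam. count lam i * i) = r"
      using sum_mset_count[of "set_mset lam" lam] sr by simp
    finally show ?thesis .
  qed
  also have "\<dots> = of_nat r * e_sym r lam"
    using True by (simp add: e_sym_def of_nat_poly)
  finally show ?thesis by simp
qed

lemma of_nat_sf: "(of_nat n :: sf) = const (of_nat n)"
  by (simp add: const_def)

lemma newton: "of_nat r * E r = (\<Sum>i\<in>{1..r}. const ((-1)^(i-1)) * (P i * E (r-i)))"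
proof (rule poly_mapping_eqI)
  fix lam
  show "lk (of_nat r * E r) lam = lk (\<Sum>i\<in>{1..r}. const ((-1)^(i-1)) * (P i * E (r-i))) lam"
    unfolding of_nat_sf lookup_sum lookup_const_mult lookup_P_mult lookup_E newton_pt
    by (intro sum.cong) auto
qed



fun cpx :: "'a::comm_ring_1 \<Rightarrow> nat \<Rightarrow> 'a" where
  "cpx x 0 = 1"
| "cpx x (Suc k) = (x - 1) * x ^ k"

definition ux :: "'a::comm_ring_1 \<Rightarrow> nat \<Rightarrow> 'a" where
  "ux x n = (\<Sum>j\<le>n. (1 - x^(Suc j)) * x^(n-j))"

lemma ux_Suc: "ux x (Suc n) = x * ux x n + (1 - x^(Suc (Suc n)))"
proof -
  have "ux x (Suc n) = (\<Sum>j\<le>n. (1 - x^(Suc j)) * x^(Suc n-j)) + (1 - x^(Suc (Suc n)))"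
    by (simp add: ux_def)
  also have "(\<Sum>j\<le>n. (1 - x^(Suc j)) * x^(Suc n-j)) = x * ux x n"
    unfolding ux_def sum_distrib_left
    by (intro sum.cong) (auto simp: Suc_diff_le algebra_simps)
  finally show ?thesis .
qed

lemma ux_closed: "(x - 1) * ux x n = x^(Suc n) - 1 - of_nat (Suc n) * (x - 1) * x^(Suc n)"
proof (induction n)
  case 0
  then show ?case by (simp add: ux_def algebra_simps power2_eq_square)
next
  case (Suc n)
  have "(x - 1) * ux x (Suc n) = x * ((x - 1) * ux x n) + (x - 1) * (1 - x^(Suc (Suc n)))"
    by (simp add: ux_Suc algebra_simps)
  also have "\<dots> = x^(Suc (Suc n)) - 1 - of_nat (Suc (Suc n)) * (x - 1) * x^(Suc (Suc n))"
    unfolding Suc by (simp add: algebra_simps)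
  finally show ?case .
qed

definition tx :: "'a::comm_ring_1 \<Rightarrow> nat \<Rightarrow> 'a" where
  "tx x n = (\<Sum>j\<le>n. (1 - x^(Suc j)) * cpx x (n - j))"

lemma tx_closed: "tx x n = of_nat (Suc n) * (1 - x) * x^n"
proof (cases n)
  case 0
  then show ?thesis by (simp add: tx_def)
next
  case (Suc m)
  have "tx x (Suc m) = (\<Sum>j\<le>m. (1 - x^(Suc j)) * cpx x (Suc m - j)) + (1 - x^(Suc (Suc m)))"
    by (simp add: tx_def)
  also have "(\<Sum>j\<le>m. (1 - x^(Suc j)) * cpx x (Suc m - j)) = (x - 1) * ux x m"
    unfolding ux_def sum_distrib_left
    by (intro sum.cong) (auto simp: Suc_diff_le algebra_simps)
  finally show ?thesis unfolding Suc ux_closed by (simp add: algebra_simps)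
qed

lemma scal_x:
  "of_nat d * cpx x d = (\<Sum>i\<in>{1..d}. - ((1 - x^i) * cpx x (d - i)))"
proof (cases d)
  case 0 then show ?thesis by simp
next
  case (Suc n)
  have "(\<Sum>i\<in>{1..Suc n}. - ((1 - x^i) * cpx x (Suc n - i))) =
        (\<Sum>j\<in>{0..n}. - ((1 - x^(Suc j)) * cpx x (n - j)))"
    unfolding One_nat_def sum.shift_bounds_cl_Suc_ivl by simp
  also have "\<dots> = - tx x n"
    by (simp add: tx_def atLeast0AtMost sum_negf)
  finally show ?thesis unfolding Suc tx_closed by (simp add: algebra_simps)
qed



abbreviation q0 :: "rat poly" where "q0 \<equiv> [:0, 1:]"
definition cp :: "nat \<Rightarrow> rat poly" where "cp k = cpx q0 k"

lemma neg1_sq: "i \<ge> 1 \<Longrightarrow> (-1::'a::comm_ring_1)^(i-1) * (-1)^i = -1"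
  by (cases i) auto

lemma scal: "of_nat d * cp d = (\<Sum>i\<in>{1..d}. (-1)^(i-1) * Cq i * cp (d - i))"
proof -
  have "(-1)^(i-1) * Cq i * cp (d - i) = - ((1 - q0^i) * cpx q0 (d - i))" if "i \<in> {1..d}" for i
  proof -
    have "(-1)^(i-1) * Cq i * cp (d - i) = ((-1)^(i-1) * (-1)^i) * ((1 - q0^i) * cpx q0 (d - i))"
      by (simp add: Cq_def cp_def monom_altdef mult.assoc)
    also have "\<dots> = - ((1 - q0^i) * cpx q0 (d - i))"
    proof -
      have h: "(-1::rat poly)^(i-1) * (-1)^i = -1" using that by (intro neg1_sq) auto
      show ?thesis by (subst h) simp
    qed
    finally show ?thesis .
  qed
  then show ?thesis unfolding cp_def scal_x by (intro sum.cong) auto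
qed

definition G :: "nat \<Rightarrow> sf poly" where
  "G m = (\<Sum>k\<le>m. monom (E (m - k) * const (cp k)) k)"

lemma coeff_G: "coeff (G j) d = (if d \<le> j then E (j - d) * const (cp d) else 0)"
  unfolding G_def coeff_sum coeff_monom
  by (auto simp: sum.delta' split: if_splits)

lemma const_sum: "const (sum f A) = (\<Sum>i\<in>A. const (f i))"
  by (induction A rule: infinite_finite_induct) (simp_all add: const_zero const_add)

lemma E0: "E 0 = 1"
proof (rule poly_mapping_eqI)
  fix lam
  have "(is_partition lam \<and> sum_mset lam = 0) \<longleftrightarrow> lam = {#}"
  proof
    assume a: "is_partition lam \<and> sum_mset lam = 0"
    show "lam = {#}"
    proof (rule ccontr)
      assume "lam \<noteq> {#}"
      then obtain x where x: "x \<in># lam" by blast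
      then have "x = 0" using a by (simp add: sum_mset_0_iff)
      then show False using a x by (simp add: is_partition_def)
    qed
  qed (simp add: is_partition_def)
  then show "lk (E 0) lam = lk 1 lam"
    by (auto simp: lookup_E e_sym_def lookup_one when_def zee_def)
qed

lemma coeff_fac_mult: "coeff (fac i * Y) d = P i * coeff Y d + (if i \<le> d then const (Cq i) * coeff Y (d - i) else 0)"
  by (simp add: fac_def distrib_right coeff_monom_mult)

lemma trm_eq:
  assumes i: "i \<in> {1..m}"
  shows "coeff ([:const ((-1)^(i-1)):] * (fac i * G (m - i))) d =
    (if i \<le> m - d \<and> d \<le> m then const ((-1)^(i-1)) * (P i * E (m - d - i)) * const (cp d) else 0) +
    (if i \<le> d \<and> d \<le> m then E (m - d) * const ((-1)^(i-1) * Cq i * cp (d - i)) else 0)"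
proof -
  have c1: "(d \<le> m - i) \<longleftrightarrow> (i \<le> m - d \<and> d \<le> m)" using i by auto
  have c2: "i \<le> d \<Longrightarrow> (d - i \<le> m - i) \<longleftrightarrow> d \<le> m" using i by auto
  have e1: "m - i - d = m - d - i" by simp
  have e2: "i \<le> d \<Longrightarrow> m - i - (d - i) = m - d" using i by auto
  let ?s = "const ((-1)^(i-1))"
  have T1: "?s * (P i * coeff (G (m - i)) d) =
     (if i \<le> m - d \<and> d \<le> m then ?s * (P i * E (m - d - i)) * const (cp d) else 0)"
    unfolding coeff_G c1[symmetric] e1 by (simp add: mult.assoc)
  have T2: "?s * (if i \<le> d then const (Cq i) * coeff (G (m - i)) (d - i) else 0) =
     (if i \<le> d \<and> d \<le> m then E (m - d) * const ((-1)^(i-1) * Cq i * cp (d - i)) else 0)"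
  proof (cases "i \<le> d")
    case True
    then show ?thesis unfolding coeff_G c2[OF True] e2[OF True]
      by (simp add: const_mult mult.assoc mult.left_commute)
  qed simp
  have "coeff ([:?s:] * (fac i * G (m - i))) d =
     ?s * (P i * coeff (G (m - i)) d) + ?s * (if i \<le> d then const (Cq i) * coeff (G (m - i)) (d - i) else 0)"
    by (simp add: coeff_fac_mult distrib_left)
  then show ?thesis unfolding T1 T2 .
qed

lemma coeff_newton_sum:
  "coeff (\<Sum>i\<in>{1..m}. [:const ((-1)^(i-1)):] * (fac i * G (m - i))) d =
   (if d \<le> m then of_nat m * (E (m - d) * const (cp d)) else 0)"
proof -
  have "coeff (\<Sum>i\<in>{1..m}. [:const ((-1)^(i-1)):] * (fac i * G (m - i))) d =
     (\<Sum>i\<in>{1..m}. (if i \<le> m - d \<and> d \<le> m then const ((-1)^(i-1)) * (P i * E (m - d - i)) * const (cp d) else 0)) +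
     (\<Sum>i\<in>{1..m}. (if i \<le> d \<and> d \<le> m then E (m - d) * const ((-1)^(i-1) * Cq i * cp (d - i)) else 0))"
    unfolding coeff_sum sum.distrib[symmetric] by (intro sum.cong refl trm_eq)
  also have "\<dots> = (if d \<le> m then of_nat m * (E (m - d) * const (cp d)) else 0)"
  proof (cases "d \<le> m")
    case False
    then show ?thesis by simp
  next
    case True
    have s1: "(\<Sum>i\<in>{1..m}. (if i \<le> m - d \<and> d \<le> m then const ((-1)^(i-1)) * (P i * E (m - d - i)) * const (cp d) else 0))
        = (\<Sum>i\<in>{1..m-d}. const ((-1)^(i-1)) * (P i * E (m - d - i))) * const (cp d)"
      unfolding sum_distrib_right
      by (rule sum.mono_neutral_cong_right) (use True in auto)
    have s2: "(\<Sum>i\<in>{1..m}. (if i \<le> d \<and> d \<le> m then E (m - d) * const ((-1)^(i-1) * Cq i * cp (d - i)) else 0))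
        = E (m - d) * const (\<Sum>i\<in>{1..d}. (-1)^(i-1) * Cq i * cp (d - i))"
    proof -
      have cs: "const (\<Sum>i\<in>{1..d}. (-1)^(i-1) * Cq i * cp (d - i)) = (\<Sum>i\<in>{1..d}. const ((-1)^(i-1) * Cq i * cp (d - i)))"
        by (rule const_sum)
      show ?thesis
        unfolding cs sum_distrib_left
        by (intro sum.mono_neutral_cong_right) (use True in auto)
    qed
    have "of_nat (m - d) * E (m - d) * const (cp d) + E (m - d) * const (of_nat d * cp d) =
          of_nat m * (E (m - d) * const (cp d))"
      using True by (simp add: const_mult of_nat_sf[symmetric] algebra_simps flip: of_nat_add)
    moreover have n1: "(\<Sum>i\<in>{1..m-d}. const ((-1)^(i-1)) * (P i * E (m - d - i))) = of_nat (m-d) * E (m-d)"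
      using newton[of "m-d"] by simp
    ultimately show ?thesis
      unfolding s1 s2 n1 scal[symmetric] using True by simp
  qed
  finally show ?thesis .
qed



lemma of_nat_sfpoly: "(of_nat n :: sf poly) = [:const (of_nat n):]"
  by (simp add: of_nat_poly of_nat_sf)

lemma Phi_of_nat: "Phi (of_nat n) = of_nat n"
  by (simp add: of_nat_sf Phi_const of_nat_sfpoly)

lemma cancel_of_nat:
  assumes "m > 0" "(of_nat m :: sf poly) * X = of_nat m * Y"
  shows "X = Y"
proof -
  have "smult (const (of_nat m)) X = smult (const (of_nat m)) Y"
    using assms(2) by (simp add: of_nat_sfpoly)
  then have "smult (const [:1 / of_nat m:]) (smult (const (of_nat m)) X) =
             smult (const [:1 / of_nat m:]) (smult (const (of_nat m)) Y)" by simp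
  moreover have "const [:1 / of_nat m:] * const (of_nat m) = 1"
  proof -
    have "[:1 / of_nat m:] * (of_nat m :: rat poly) = 1"
      using assms(1) by (simp add: of_nat_poly)
    then show ?thesis by (simp add: const_mult[symmetric] const_one)
  qed
  ultimately show ?thesis by (simp add: smult_smult)
qed

lemma Phi_E: "Phi (E m) = G m"
proof (induction m rule: less_induct)
  case (less m)
  show ?case
  proof (cases "m = 0")
    case True
    show ?thesis unfolding True G_def cp_def E0 Phi_one by (simp add: const_one E0 monom_0 flip: one_pCons)
  next
    case False
    have "of_nat m * Phi (E m) = Phi (of_nat m * E m)"
      by (simp only: Phi_mult Phi_of_nat)
    also have "\<dots> = (\<Sum>i\<in>{1..m}. [:const ((-1)^(i-1)):] * (fac i * Phi (E (m - i))))"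
      unfolding newton Phi_sum by (simp only: Phi_mult Phi_const Phi_P)
    also have "\<dots> = (\<Sum>i\<in>{1..m}. [:const ((-1)^(i-1)):] * (fac i * G (m - i)))"
    proof (rule sum.cong[OF refl])
      fix i assume "i \<in> {1..m}"
      then have "m - i < m" by auto
      then show "[:const ((-1)^(i-1)):] * (fac i * Phi (E (m - i))) = [:const ((-1)^(i-1)):] * (fac i * G (m - i))"
        by (simp only: less.IH)
    qed
    also have "\<dots> = of_nat m * G m"
    proof (rule poly_eqI)
      fix d
      show "coeff (\<Sum>i\<in>{1..m}. [:const ((-1)^(i-1)):] * (fac i * G (m - i))) d = coeff (of_nat m * G m) d"
        unfolding coeff_newton_sum of_nat_sfpoly by (simp add: of_nat_sf coeff_G)
    qed
    finally have "of_nat m * Phi (E m) = of_nat m * G m" .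
    then show ?thesis using False cancel_of_nat by blast
  qed
qed



definition EP :: "nat multiset \<Rightarrow> sf" where "EP nu = prod_mset (image_mset E nu)"

lemma lk_prod_list_E: "lk (prod_list (map E xs)) = foldr (\<lambda>r acc. symprod (e_sym r) acc) xs sym_one"
proof (induction xs)
  case Nil
  then show ?case by (auto simp: sym_one_def lookup_one when_def fun_eq_iff)
next
  case (Cons x xs)
  have "lk (E x * prod_list (map E xs)) = symprod (e_sym x) (lk (prod_list (map E xs)))"
    by (simp add: fun_eq_iff lookup_mult lookup_E)
  with Cons show ?case by simp
qed

lemma lk_EP: "lk (EP nu) = e_part nu"
proof -
  have "EP nu = prod_list (map E (sorted_list_of_multiset nu))"
    by (metis EP_def mset_map mset_sorted_list_of_multiset prod_mset_prod_list)
  then show ?thesis by (simp add: lk_prod_list_E e_part_def)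
qed

lemma EP_add: "EP (a + b) = EP a * EP b"
  by (simp add: EP_def)

lemma Phi_EP: "Phi (EP mu) = prod_mset (image_mset G mu)"
  by (induction mu) (simp_all add: EP_def Phi_one Phi_mult Phi_E)

lemma keys_eq: "{lam. lk F lam \<noteq> 0} = Poly_Mapping.keys F"
  by (auto simp: in_keys_iff)

lemma coeff_Phi: "coeff (Phi F) d = (\<Sum>lam\<in>Poly_Mapping.keys F. const (lk F lam) * coeff (M lam) d)"
  by (simp add: Phi_def coeff_sum)

lemma sum_list_sorted: "sum_list (sorted_list_of_multiset lam) = sum_mset lam"
  by (metis mset_sorted_list_of_multiset sum_mset_sum_list)

lemma Bop_formula:
  assumes D: "\<And>lam. lam \<in> Poly_Mapping.keys F \<Longrightarrow> sum_mset lam \<le> D"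
  shows "Bop a (lk F) = lk (\<Sum>d\<le>D. coeff (Phi F) d * E (a + d))"
proof (rule ext)
  fix nu
  have inner: "(\<Sum>d\<in>{0..sum_mset lam}. lk F lam * symprod (psub (sorted_list_of_multiset lam) d) (e_sym (a + d)) nu)
     = (\<Sum>d\<le>D. lk (const (lk F lam) * (coeff (M lam) d * E (a + d))) nu)"
    if lam: "lam \<in> Poly_Mapping.keys F" for lam
  proof -
    have ps: "psub (sorted_list_of_multiset lam) d = lk (coeff (M lam) d)" for d
      by (rule ext) (simp add: psub_eq M_sorted)
    have "(\<Sum>d\<in>{0..sum_mset lam}. lk F lam * symprod (psub (sorted_list_of_multiset lam) d) (e_sym (a + d)) nu)
       = (\<Sum>d\<le>D. lk F lam * symprod (psub (sorted_list_of_multiset lam) d) (e_sym (a + d)) nu)"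
    proof (rule sum.mono_neutral_left)
      show "finite {..D}" by simp
      show "{0..sum_mset lam} \<subseteq> {..D}" using D[OF lam] by auto
      show "\<forall>i\<in>{..D} - {0..sum_mset lam}. lk F lam * symprod (psub (sorted_list_of_multiset lam) i) (e_sym (a + i)) nu = 0"
        by (auto simp: psub_zero sum_list_sorted symprod_def)
    qed
    also have "\<dots> = (\<Sum>d\<le>D. lk (const (lk F lam) * (coeff (M lam) d * E (a + d))) nu)"
      by (intro sum.cong refl, subst lookup_const_mult) (simp add: lookup_mult ps lookup_E)
    finally show ?thesis .
  qed
  have "Bop a (lk F) nu = (\<Sum>lam\<in>Poly_Mapping.keys F. \<Sum>d\<le>D. lk (const (lk F lam) * (coeff (M lam) d * E (a + d))) nu)"
    unfolding Bop_def keys_eq by (intro sum.cong refl inner)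
  also have "\<dots> = (\<Sum>d\<le>D. \<Sum>lam\<in>Poly_Mapping.keys F. lk (const (lk F lam) * (coeff (M lam) d * E (a + d))) nu)"
    by (rule sum.swap)
  also have "\<dots> = lk (\<Sum>d\<le>D. coeff (Phi F) d * E (a + d)) nu"
    by (simp add: coeff_Phi lookup_sum sum_distrib_right mult.assoc)
  finally show "Bop a (lk F) nu = lk (\<Sum>d\<le>D. coeff (Phi F) d * E (a + d)) nu" .
qed



definition nn :: "rat poly \<Rightarrow> bool" where
  "nn r \<longleftrightarrow> (\<forall>i. coeff r i \<in> \<int> \<and> coeff r i \<ge> 0)"

lemma nn_0: "nn 0" by (simp add: nn_def)
lemma nn_1: "nn 1" by (simp add: nn_def coeff_1)
lemma nn_add: "nn r \<Longrightarrow> nn s \<Longrightarrow> nn (r + s)"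
  by (simp add: nn_def)
lemma nn_mult: "nn r \<Longrightarrow> nn s \<Longrightarrow> nn (r * s)"
  unfolding nn_def coeff_mult
  by (auto intro!: Ints_sum Ints_mult sum_nonneg mult_nonneg_nonneg)
lemma nn_pCons: "c \<in> \<int> \<Longrightarrow> c \<ge> 0 \<Longrightarrow> nn p \<Longrightarrow> nn (pCons c p)"
  by (auto simp: nn_def coeff_pCons split: nat.splits)

definition snn :: "rat poly \<Rightarrow> bool" where
  "snn p \<longleftrightarrow> nn (pcompose p [:1, 1:])"

lemma snn_0: "snn 0" by (simp add: snn_def nn_0)
lemma snn_1: "snn 1" by (simp add: snn_def pcompose_1 nn_1)
lemma snn_add: "snn r \<Longrightarrow> snn s \<Longrightarrow> snn (r + s)"
  by (simp add: snn_def pcompose_add nn_add)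
lemma snn_mult: "snn r \<Longrightarrow> snn s \<Longrightarrow> snn (r * s)"
  by (simp add: snn_def pcompose_mult nn_mult)
lemma snn_sum: "(\<And>i. i \<in> A \<Longrightarrow> snn (f i)) \<Longrightarrow> snn (sum f A)"
  by (induction A rule: infinite_finite_induct) (auto simp: snn_0 snn_add)
lemma snn_power: "snn r \<Longrightarrow> snn (r ^ n)"
  by (induction n) (auto simp: snn_1 snn_mult)
lemma nn_11: "nn [:1, 1:]"
  by (intro nn_pCons nn_0) auto
lemma nn_01: "nn [:0, 1:]"
  by (intro nn_pCons nn_0) auto
lemma snn_q0: "snn q0"
proof -
  have "pcompose q0 [:1,1:] = [:1,1:]" by (simp add: pcompose_pCons)
  then show ?thesis by (simp add: snn_def nn_11)
qed
lemma snn_q0m1: "snn (q0 - 1)"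
proof -
  have "pcompose (q0 - 1) [:1, 1:] = q0"
    by (simp add: pcompose_diff pcompose_pCons pcompose_1 one_pCons)
  then show ?thesis by (simp add: snn_def nn_01)
qed
lemma snn_cp: "snn (cp k)"
  by (cases k) (auto simp: cp_def snn_1 snn_mult snn_q0m1 snn_power snn_q0)

definition good :: "nat \<Rightarrow> sf \<Rightarrow> bool" where
  "good N x \<longleftrightarrow> (\<exists>Pc. (\<forall>nu. snn (Pc nu)) \<and> x = (\<Sum>nu\<in>Parts N. const (Pc nu) * EP nu))"

lemma good_zero: "good N 0"
  unfolding good_def by (rule exI[of _ "\<lambda>_. 0"]) (simp add: snn_0 const_zero)

lemma good_add: "good N x \<Longrightarrow> good N y \<Longrightarrow> good N (x + y)"
  unfolding good_def
  apply (elim exE conjE)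
  subgoal for P1 P2
    by (rule exI[of _ "\<lambda>nu. P1 nu + P2 nu"]) (simp add: snn_add const_add distrib_right sum.distrib)
  done

lemma good_sum: "(\<And>i. i \<in> A \<Longrightarrow> good N (f i)) \<Longrightarrow> good N (sum f A)"
  by (induction A rule: infinite_finite_induct) (auto simp: good_zero good_add)

lemma good_scale: "snn c \<Longrightarrow> good N x \<Longrightarrow> good N (const c * x)"
  unfolding good_def
  apply (elim exE conjE)
  subgoal for P1
    by (rule exI[of _ "\<lambda>nu. c * P1 nu"]) (simp add: snn_mult const_mult sum_distrib_left mult.assoc)
  done

lemma Parts_add: "nu \<in> Parts N \<Longrightarrow> nu' \<in> Parts K \<Longrightarrow> nu + nu' \<in> Parts (N + K)"
  by (auto simp: Parts_def is_partition_def)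

lemma good_mult:
  assumes "good N x" "good K y"
  shows "good (N + K) (x * y)"
proof -
  obtain P1 where P1: "\<forall>nu. snn (P1 nu)" "x = (\<Sum>nu\<in>Parts N. const (P1 nu) * EP nu)"
    using assms(1) unfolding good_def by blast
  obtain P2 where P2: "\<forall>nu. snn (P2 nu)" "y = (\<Sum>nu\<in>Parts K. const (P2 nu) * EP nu)"
    using assms(2) unfolding good_def by blast
  let ?S = "Parts N \<times> Parts K"
  let ?h = "\<lambda>p. const (P1 (fst p) * P2 (snd p)) * EP (fst p + snd p)"
  define P3 where "P3 rho = (\<Sum>p\<in>{p\<in>?S. fst p + snd p = rho}. P1 (fst p) * P2 (snd p))" for rho
  have fS: "finite ?S" by (simp add: finite_Parts)
  have "x * y = (\<Sum>nu\<in>Parts N. \<Sum>nu'\<in>Parts K. const (P1 nu * P2 nu') * EP (nu + nu'))"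
    unfolding P1(2) P2(2) sum_product
    by (intro sum.cong refl) (simp add: const_mult EP_add algebra_simps)
  also have "\<dots> = (\<Sum>p\<in>?S. ?h p)"
    by (simp add: sum.cartesian_product split_beta)
  also have "\<dots> = (\<Sum>rho\<in>Parts (N + K). \<Sum>p\<in>{p\<in>?S. fst p + snd p = rho}. ?h p)"
    by (rule sum.group[symmetric]) (auto simp: fS finite_Parts Parts_add)
  also have "\<dots> = (\<Sum>rho\<in>Parts (N + K). const (P3 rho) * EP rho)"
    unfolding P3_def const_sum sum_distrib_right
    by (intro sum.cong refl) auto
  finally have "x * y = (\<Sum>rho\<in>Parts (N + K). const (P3 rho) * EP rho)" .
  moreover have "\<forall>rho. snn (P3 rho)"
    unfolding P3_def using P1(1) P2(1) by (auto intro!: snn_sum snn_mult)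
  ultimately show ?thesis unfolding good_def by blast
qed

lemma good_E: "good r (E r)"
proof (cases "r = 0")
  case True
  have "E r = (\<Sum>nu\<in>Parts 0. const (if nu = {#} then 1 else 0) * EP nu)"
  proof -
    have "{#} \<in> Parts 0" by (simp add: Parts_def is_partition_def)
    then have "(\<Sum>nu\<in>Parts 0. const (if nu = {#} then 1 else 0) * EP nu) = const 1 * EP {#}"
      by (subst sum.cong[OF refl, of _ _ "\<lambda>nu. if nu = {#} then EP nu else 0"])
         (auto simp: const_one const_zero finite_Parts)
    then show ?thesis using True by (simp add: E0 const_one EP_def)
  qed
  then show ?thesis using True unfolding good_def
    by (intro exI[of _ "\<lambda>nu. if nu = {#} then 1 else 0"]) (auto simp: snn_0 snn_1)
next
  case False
  have "E r = (\<Sum>nu\<in>Parts r. const (if nu = {#r#} then 1 else 0) * EP nu)"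
  proof -
    have "{#r#} \<in> Parts r" using False by (simp add: Parts_def is_partition_def)
    then have "(\<Sum>nu\<in>Parts r. const (if nu = {#r#} then 1 else 0) * EP nu) = const 1 * EP {#r#}"
      by (subst sum.cong[OF refl, of _ _ "\<lambda>nu. if nu = {#r#} then EP nu else 0"])
         (auto simp: const_one const_zero finite_Parts)
    then show ?thesis by (simp add: const_one EP_def)
  qed
  then show ?thesis unfolding good_def
    by (intro exI[of _ "\<lambda>nu. if nu = {#r#} then 1 else 0"]) (auto simp: snn_0 snn_1)
qed



lemma good_coeff_G: "good (j - d) (coeff (G j) d)"
proof (cases "d \<le> j")
  case True
  then show ?thesis
    by (simp add: coeff_G mult.commute[of "E _"] good_scale snn_cp good_E)
qed (simp add: coeff_G good_zero)

lemma good_prodG: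
  "good (sum_mset mu - d) (coeff (prod_mset (image_mset G mu)) d) \<and>
   (sum_mset mu < d \<longrightarrow> coeff (prod_mset (image_mset G mu)) d = 0)"
proof (induction mu arbitrary: d)
  case empty
  show ?case
  proof (cases "d = 0")
    case True
    then show ?thesis using good_E[of 0] by (simp add: E0)
  qed (simp add: coeff_1 good_zero)
next
  case (add m mu)
  let ?R = "prod_mset (image_mset G mu)"
  let ?n = "sum_mset mu"
  have eq: "coeff (prod_mset (image_mset G (add_mset m mu))) d = (\<Sum>i\<le>d. coeff (G m) i * coeff ?R (d - i))"
    by (simp add: coeff_mult)
  have zero: "coeff (G m) i * coeff ?R (d - i) = 0" if "\<not> (i \<le> m \<and> d - i \<le> ?n)" for i
  proof (cases "i \<le> m")
    case True
    then have "?n < d - i" using that by simp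
    then show ?thesis using add.IH[of "d - i"] by simp
  qed (simp add: coeff_G)
  have "good ((m + ?n) - d) (coeff (G m) i * coeff ?R (d - i))" if i: "i \<le> d" for i
  proof (cases "i \<le> m \<and> d - i \<le> ?n")
    case True
    have "good ((m - i) + (?n - (d - i))) (coeff (G m) i * coeff ?R (d - i))"
      using good_mult[OF good_coeff_G add.IH[THEN conjunct1]] .
    moreover have "(m - i) + (?n - (d - i)) = (m + ?n) - d" using True i by auto
    ultimately show ?thesis by simp
  next
    case False
    then show ?thesis using zero[OF False] by (simp add: good_zero)
  qed
  then have g: "good ((m + ?n) - d) (coeff (prod_mset (image_mset G (add_mset m mu))) d)"
    unfolding eq by (intro good_sum) auto
  have "m + ?n < d \<longrightarrow> coeff (prod_mset (image_mset G (add_mset m mu))) d = 0"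
  proof
    assume "m + ?n < d"
    then have "\<not> (i \<le> m \<and> d - i \<le> ?n)" for i by auto
    then show "coeff (prod_mset (image_mset G (add_mset m mu))) d = 0"
      unfolding eq using zero by (simp add: sum.neutral)
  qed
  with g show ?case by simp
qed

definition cst :: "sf \<Rightarrow> bool" where "cst x \<longleftrightarrow> (\<forall>lam. \<exists>c. lk x lam = [:c:])"

lemma cst_one: "cst 1"
  by (auto simp: cst_def lookup_one when_def intro: exI[of _ 1])

lemma cst_E: "cst (E r)"
  by (auto simp: cst_def lookup_E e_sym_def)

lemma cst_mult: assumes "cst x" "cst y" shows "cst (x * y)"
proof -
  obtain f where f: "\<And>lam. lk x lam = [:f lam:]" using assms(1) unfolding cst_def by metis
  obtain g where g: "\<And>lam. lk y lam = [:g lam:]" using assms(2) unfolding cst_def by metis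
  show ?thesis unfolding cst_def
    by (auto simp: lookup_mult symprod_def f g sum_const_poly)
qed

lemma cst_EP: "cst (EP nu)"
  by (induction nu) (auto simp: EP_def cst_one cst_mult cst_E)



theorem proposition2p1:
  fixes a :: nat and mu :: "nat multiset"
  assumes "a \<ge> 1" and "is_partition mu"
  shows "\<exists>Q :: nat multiset \<Rightarrow> int poly.
           (\<forall>nu i. coeff (Q nu) i \<ge> 0) \<and>
           q_shift (Bop a (e_part mu)) =
             (\<lambda>lam. \<Sum>nu\<in>{nu. is_partition nu \<and> sum_mset nu = sum_mset mu + a}.
                       map_poly of_int (Q nu) * e_part nu lam)"
proof -
  define F where "F = EP mu"
  define n where "n = sum_mset mu"
  define D where "D = (\<Sum>lam\<in>Poly_Mapping.keys F. sum_mset lam)"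
  define X where "X = (\<Sum>d\<le>D. coeff (Phi F) d * E (a + d))"
  have Dle: "sum_mset lam \<le> D" if "lam \<in> Poly_Mapping.keys F" for lam
    unfolding D_def using that by (intro member_le_sum) auto
  have B: "Bop a (e_part mu) = lk X"
    unfolding X_def using Bop_formula[of F D a, OF Dle] by (simp add: F_def lk_EP)
  have "good (n + a) X"
    unfolding X_def
  proof (intro good_sum)
    fix d assume "d \<in> {..D}"
    show "good (n + a) (coeff (Phi F) d * E (a + d))"
    proof (cases "d \<le> n")
      case True
      have "good ((n - d) + (a + d)) (coeff (Phi F) d * E (a + d))"
        using good_mult[OF good_prodG[of mu d, THEN conjunct1] good_E[of "a + d"]]
        by (simp add: F_def Phi_EP n_def)
      moreover have "(n - d) + (a + d) = n + a" using True by simp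
      ultimately show ?thesis by simp
    next
      case False
      then have "coeff (Phi F) d = 0"
        using good_prodG[of mu d] by (simp add: F_def Phi_EP n_def)
      then show ?thesis by (simp add: good_zero)
    qed
  qed
  then obtain Pc where Pc: "\<forall>nu. snn (Pc nu)" and X: "X = (\<Sum>nu\<in>Parts (n + a). const (Pc nu) * EP nu)"
    unfolding good_def by blast
  define Q where "Q nu = map_poly floor (pcompose (Pc nu) [:1, 1:])" for nu
  have Qc: "coeff (Q nu) i = floor (coeff (pcompose (Pc nu) [:1, 1:]) i)" for nu i
    unfolding Q_def by (simp add: coeff_map_poly)
  have Q1: "coeff (Q nu) i \<ge> 0" for nu i
    using Pc unfolding Qc snn_def nn_def by simp
  have Q2: "map_poly of_int (Q nu) = pcompose (Pc nu) [:1, 1:]" for nu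
  proof (rule poly_eqI)
    fix i
    have "coeff (pcompose (Pc nu) [:1, 1:]) i \<in> \<int>" using Pc unfolding snn_def nn_def by simp
    then show "coeff (map_poly of_int (Q nu)) i = coeff (pcompose (Pc nu) [:1, 1:]) i"
      by (simp add: coeff_map_poly Qc)
  qed
  have "q_shift (Bop a (e_part mu)) lam =
    (\<Sum>nu\<in>{nu. is_partition nu \<and> sum_mset nu = sum_mset mu + a}. map_poly of_int (Q nu) * e_part nu lam)" for lam
  proof -
    have cst: "pcompose (e_part nu lam) [:1, 1:] = e_part nu lam" for nu
    proof -
      obtain c where "lk (EP nu) lam = [:c:]" using cst_EP[of nu] unfolding cst_def by blast
      then show ?thesis by (simp add: lk_EP[symmetric])
    qed
    have "q_shift (Bop a (e_part mu)) lam = pcompose (lk X lam) [:1, 1:]"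
      by (simp add: B q_shift_def)
    also have "\<dots> = (\<Sum>nu\<in>Parts (n + a). pcompose (Pc nu) [:1, 1:] * e_part nu lam)"
      unfolding X lookup_sum lookup_const_mult lk_EP pcompose_sum pcompose_mult cst ..
    also have "\<dots> = (\<Sum>nu\<in>{nu. is_partition nu \<and> sum_mset nu = sum_mset mu + a}. map_poly of_int (Q nu) * e_part nu lam)"
      by (simp add: Parts_def n_def Q2)
    finally show ?thesis .
  qed
  then show ?thesis using Q1 by (intro exI[of _ Q]) auto
qed


end
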